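(* Let $k\geq 2$ be an integer and $g_k(x)=xf_{k-1}(x)/f_k(x)$. Then $g_k'(x)>0$ for every $x>0$.
   Context: $f_t(x)=e^{-x}\sum_{i\geq t}x^i/i!$. *)

theory Defs
  imports Complex_Main
begin

definition f_tail :: "nat \<Rightarrow> real \<Rightarrow> real" where
  "f_tail t x = exp (- x) * (\<Sum>i. if t \<le> i then x ^ i / fact i else 0)"

definition g_ratio :: "nat \<Rightarrow> real \<Rightarrow> real" where
  "g_ratio k x = x * f_tail (k - 1) x / f_tail k x"

end

theory Submission
  imports Defs
begin

definition EE :: "nat \<Rightarrow> real \<Rightarrow> real" where
  "EE t x = exp x - (\<Sum>i<t. x^i / fact i)"

lemma sumsS: "(\<lambda>i. if t \<le> i then x^i / fact i else 0) sums EE t x"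
proof -
  have e: "(\<lambda>i. x^i / fact i) sums exp x"
    using exp_converges[of x] by (simp add: divide_inverse mult.commute)
  have f: "(\<lambda>i. if i \<in> {..<t} then x^i / fact i else 0) sums (\<Sum>i<t. x^i / fact i)"
    by (rule sums_If_finite_set) simp
  have "(\<lambda>i. x^i / fact i - (if i \<in> {..<t} then x^i / fact i else 0)) sums EE t x"
    unfolding EE_def by (rule sums_diff[OF e f])
  moreover have "(\<lambda>i. x^i / fact i - (if i \<in> {..<t} then x^i / fact i else 0))
      = (\<lambda>i. if t \<le> i then x^i / fact i else (0::real))"
    by (auto simp: fun_eq_iff)
  ultimately show ?thesis by simp
qed

lemma shiftfact: "real (Suc j) * x^(Suc j) / fact (Suc j) = x * (x^j / fact j :: real)"
proof -
  have "fact (Suc j) = real (Suc j) * fact j" by (simp add: fact_Suc)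
  then show ?thesis by (simp del: of_nat_Suc fact_Suc)
qed

lemma shiftfact2: "(real (Suc j))^2 * x^(Suc j) / fact (Suc j) = x * (real j * x^j / fact j + x^j / fact j :: real)"
proof -
  have "(real (Suc j))^2 * x^(Suc j) / fact (Suc j) = real (Suc j) * (real (Suc j) * x^(Suc j) / fact (Suc j))"
    by (simp add: power2_eq_square)
  also have "\<dots> = real (Suc j) * (x * (x^j / fact j))" by (simp only: shiftfact)
  also have "\<dots> = x * (real j * x^j / fact j + x^j / fact j)"
    by (simp add: algebra_simps add_divide_distrib)
  finally show ?thesis .
qed

lemma sumsW1:
  assumes "1 \<le> t"
  shows "(\<lambda>i. if t \<le> i then real i * x^i / fact i else 0) sums (x * EE (t-1) x)"
proof -
  have "(\<lambda>j. x * (if t - 1 \<le> j then x^j / fact j else 0)) sums (x * EE (t-1) x)"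
    by (rule sums_mult[OF sumsS])
  moreover have "(\<lambda>j. x * (if t - 1 \<le> j then x^j / fact j else 0))
     = (\<lambda>j. if t \<le> Suc j then real (Suc j) * x^(Suc j) / fact (Suc j) else 0)"
  proof (rule ext)
    fix j
    show "x * (if t - 1 \<le> j then x^j / fact j else 0) = (if t \<le> Suc j then real (Suc j) * x^(Suc j) / fact (Suc j) else 0)"
    proof -
      have c: "(t \<le> Suc j) = (t - 1 \<le> j)" using assms by arith
      show ?thesis
      proof (cases "t - 1 \<le> j")
        case True then show ?thesis by (simp only: c True if_True shiftfact)
      next
        case False then show ?thesis by (simp only: c False if_False mult_zero_right add_0)
      qed
    qed
  qed
  ultimately have "(\<lambda>j. if t \<le> Suc j then real (Suc j) * x^(Suc j) / fact (Suc j) else 0) sums (x * EE (t-1) x)"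
    by simp
  then show ?thesis using assms
    by (subst (asm) sums_Suc_iff) simp
qed

lemma sumsW2:
  assumes "2 \<le> t"
  shows "(\<lambda>i. if t \<le> i then (real i)^2 * x^i / fact i else 0) sums (x^2 * EE (t-2) x + x * EE (t-1) x)"
proof -
  have a: "(\<lambda>j. if t - 1 \<le> j then real j * x^j / fact j else 0) sums (x * EE (t-1-1) x)"
    using assms by (intro sumsW1) simp
  have "(\<lambda>j. x * ((if t - 1 \<le> j then real j * x^j / fact j else 0) + (if t - 1 \<le> j then x^j / fact j else 0)))
      sums (x * (x * EE (t-1-1) x + EE (t-1) x))"
    by (rule sums_mult[OF sums_add[OF a sumsS]])
  moreover have "(\<lambda>j. x * ((if t - 1 \<le> j then real j * x^j / fact j else 0) + (if t - 1 \<le> j then x^j / fact j else 0)))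
     = (\<lambda>j. if t \<le> Suc j then (real (Suc j))^2 * x^(Suc j) / fact (Suc j) else 0)"
  proof (rule ext)
    fix j
    show "x * ((if t - 1 \<le> j then real j * x^j / fact j else 0) + (if t - 1 \<le> j then x^j / fact j else 0)) = (if t \<le> Suc j then (real (Suc j))^2 * x^(Suc j) / fact (Suc j) else 0)"
    proof -
      have c: "(t \<le> Suc j) = (t - 1 \<le> j)" using assms by arith
      show ?thesis
      proof (cases "t - 1 \<le> j")
        case True then show ?thesis by (simp only: c True if_True shiftfact2)
      next
        case False then show ?thesis by (simp only: c False if_False mult_zero_right add_0)
      qed
    qed
  qed
  moreover have "t - 1 - 1 = t - 2" by simp
  ultimately have "(\<lambda>j. if t \<le> Suc j then (real (Suc j))^2 * x^(Suc j) / fact (Suc j) else 0) sums (x^2 * EE (t-2) x + x * EE (t-1) x)"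
    by (simp add: algebra_simps power2_eq_square)
  then show ?thesis using assms
    by (subst (asm) sums_Suc_iff) simp
qed


lemma EE_pos:
  assumes "x > 0" shows "EE t x > 0"
proof -
  have "0 < suminf (\<lambda>i. if t \<le> i then x^i / fact i else 0)"
    by (rule suminf_pos2[where i=t]) (use sums_summable[OF sumsS] assms in \<open>auto\<close>)
  then show ?thesis using sums_unique[OF sumsS[of t x]] by simp
qed

lemma ftail_eq: "f_tail t y = exp (- y) * EE t y"
  unfolding f_tail_def using sums_unique[OF sumsS[of t y]] by simp

lemma g_eq: "g_ratio k = (\<lambda>y. y * EE (k-1) y / EE k y)"
  by (simp add: fun_eq_iff g_ratio_def ftail_eq)

lemma deriv_P: "((\<lambda>y. \<Sum>i<Suc m. y^i / fact i) has_real_derivative (\<Sum>i<m. y^i / fact i)) (at y)"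
proof (induction m)
  case 0
  then show ?case by simp
next
  case (Suc m)
  have d: "((\<lambda>y. y^(Suc m) / fact (Suc m)) has_real_derivative (real (Suc m) * y^m / fact (Suc m))) (at y)"
  proof -
    have "((\<lambda>y. y^(Suc m)) has_real_derivative real (Suc m) * y^m) (at y)"
      using DERIV_pow[of "Suc m" y UNIV] by simp
    then show ?thesis by (rule DERIV_cdivide)
  qed
  have e: "real (Suc m) * y^m / fact (Suc m) = y^m / fact m"
    by (simp add: fact_Suc del: of_nat_Suc)
  have "((\<lambda>y. (\<Sum>i<Suc m. y^i / fact i) + y^(Suc m) / fact (Suc m)) has_real_derivative
        ((\<Sum>i<m. y^i / fact i) + y^m / fact m)) (at y)"
    using DERIV_add[OF Suc.IH d] e by simp
  then show ?case by simp
qed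

lemma deriv_EE:
  assumes "1 \<le> t" shows "(EE t has_real_derivative EE (t-1) y) (at y)"
proof -
  obtain m where m: "t = Suc m" using assms by (cases t) auto
  show ?thesis unfolding EE_def m
    using DERIV_diff[OF DERIV_exp deriv_P[of m y]] by simp
qed

theorem lemma37:
  fixes k :: nat and x :: real
  assumes "k \<ge> 2" and "x > 0"
  shows "\<exists>D. (g_ratio k has_real_derivative D) (at x) \<and> D > 0"
proof -
  define a where "a = EE (k-1) x"
  define b where "b = EE k x"
  define c where "c = EE (k-2) x"
  have bpos: "b > 0" unfolding b_def using EE_pos assms by simp
  have d1: "(EE (k-1) has_real_derivative c) (at x)"
    unfolding c_def using deriv_EE[of "k-1" x] assms by (simp add: numeral_2_eq_2)
  have d2: "(EE k has_real_derivative a) (at x)"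
    unfolding a_def using deriv_EE[of k x] assms by simp
  have dg: "(g_ratio k has_real_derivative ((1 * a + x * c) * b - x * a * a) / (b * b)) (at x)"
    unfolding g_eq
    using DERIV_divide[OF DERIV_mult[OF DERIV_ident d1] d2] bpos unfolding a_def b_def by (simp add: mult.commute)
  define W1 where "W1 = x * a"
  define W2 where "W2 = x^2 * c + x * a"
  define \<mu> where "\<mu> = W1 / b"
  have s0: "(\<lambda>i. if k \<le> i then x^i / fact i else 0) sums b" unfolding b_def by (rule sumsS)
  have s1: "(\<lambda>i. if k \<le> i then real i * x^i / fact i else 0) sums W1"
    unfolding W1_def a_def using sumsW1[of k x] assms by simp
  have s2: "(\<lambda>i. if k \<le> i then (real i)^2 * x^i / fact i else 0) sums W2"
    unfolding W2_def a_def c_def using sumsW2[of k x] assms by simp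
  have sv: "(\<lambda>i. (if k \<le> i then (real i)^2 * x^i / fact i else 0) - (2*\<mu>) * (if k \<le> i then real i * x^i / fact i else 0)
       + \<mu>^2 * (if k \<le> i then x^i / fact i else 0)) sums (W2 - (2*\<mu>) * W1 + \<mu>^2 * b)"
    by (intro sums_add sums_diff sums_mult s0 s1 s2)
  have eqv: "(\<lambda>i. (if k \<le> i then (real i)^2 * x^i / fact i else 0) - (2*\<mu>) * (if k \<le> i then real i * x^i / fact i else 0)
       + \<mu>^2 * (if k \<le> i then x^i / fact i else 0)) = (\<lambda>i. if k \<le> i then (real i - \<mu>)^2 * x^i / fact i else 0)"
    by (auto simp: fun_eq_iff power2_eq_square field_simps)
  have sv2: "(\<lambda>i. if k \<le> i then (real i - \<mu>)^2 * x^i / fact i else 0) sums (W2 - (2*\<mu>) * W1 + \<mu>^2 * b)"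
    using sv eqv by simp
  define i0 where "i0 = (if \<mu> = real k then k + 1 else k)"
  have "0 < suminf (\<lambda>i. if k \<le> i then (real i - \<mu>)^2 * x^i / fact i else 0)"
  proof (rule suminf_pos2[where i=i0])
    show "summable (\<lambda>i. if k \<le> i then (real i - \<mu>)^2 * x^i / fact i else 0)"
      using sv2 by (rule sums_summable)
    show "\<And>n. 0 \<le> (if k \<le> n then (real n - \<mu>)^2 * x^n / fact n else 0)"
      using assms by auto
    have "real i0 \<noteq> \<mu>" unfolding i0_def by auto
    then show "0 < (if k \<le> i0 then (real i0 - \<mu>)^2 * x^i0 / fact i0 else 0)"
      using assms unfolding i0_def by auto
  qed
  then have V: "W2 - (2*\<mu>) * W1 + \<mu>^2 * b > 0" using sums_unique[OF sv2] by simp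
  have "b * (W2 - (2*\<mu>) * W1 + \<mu>^2 * b) = b * W2 - W1^2"
    unfolding \<mu>_def using bpos by (simp add: field_simps power2_eq_square)
  then have "b * W2 - W1^2 > 0" using V bpos by (metis mult_pos_pos)
  moreover have "b * W2 - W1^2 = x * ((1 * a + x * c) * b - x * a * a)"
    unfolding W1_def W2_def by (simp add: algebra_simps power2_eq_square)
  ultimately have "(1 * a + x * c) * b - x * a * a > 0"
    using assms by (simp add: zero_less_mult_iff)
  then have "((1 * a + x * c) * b - x * a * a) / (b * b) > 0" using bpos by simp
  with dg show ?thesis by blast
qed

end
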